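(* Let $(C(G_i,S_i))_{i\in I}$ be an esperantist family of Cayley graphs of finite groups $G_i$ with symmetric generating sets $S_i$ (of common cardinality), and let $N_i\le G_i$ be subgroups such that $$\log(2[G_i:N_i])\ge\delta\log(2|G_i|)$$ for all $i$, for some $\delta>0$ independent of $i$. Then the family of Cayley–Schreier graphs $(C(G_i/N_i,S_i))_{i\in I}$ is also an esperantist family.
   Context: For a group $G$ with finite symmetric generating set $S$ and subgroup $H$, $C(G/H,S)$ is the $|S|$-regular graph (loops and multiple edges allowed) with vertex set $G/H$ and an edge from $xH$ to $sxH$ for each $s\in S$; for $H=1$ this is the Cayley graph $C(G,S)$. For a connected $r$-regular graph $\Gamma$, $\lambda_1(\Gamma)$ is the smallest nonzero eigenvalue of $r\,\mathrm{Id}-A(\Gamma)$. A family $(\Gamma_i)$ of connected $r$-regular graphs is esperantist if for every $N$ only finitely many $i$ have at most $N$ vertices, and there exist $c>0$, $A\ge0$ with $\lambda_1(\Gamma_i)\ge c/(\log 2|\Gamma_i|)^A$ for all $i$. *)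

theory Defs
  imports Complex_Main "HOL-Algebra.Algebra"
begin

text \<open>A graph is given by a vertex set V and an adjacency function A, where A u v is
  the number of edges from u to v (loops and multiple edges allowed).\<close>

definition regular_graph :: "'v set \<Rightarrow> ('v \<Rightarrow> 'v \<Rightarrow> nat) \<Rightarrow> nat \<Rightarrow> bool" where
  "regular_graph V A r \<longleftrightarrow> finite V \<and> V \<noteq> {} \<and>
     (\<forall>u\<in>V. \<forall>w\<in>V. A u w = A w u) \<and>
     (\<forall>u\<in>V. \<forall>w. 0 < A u w \<longrightarrow> w \<in> V) \<and>
     (\<forall>v\<in>V. (\<Sum>w\<in>V. A v w) = r)"

definition connected_graph :: "'v set \<Rightarrow> ('v \<Rightarrow> 'v \<Rightarrow> nat) \<Rightarrow> bool" where
  "connected_graph V A \<longleftrightarrow>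
     (\<forall>u\<in>V. \<forall>v\<in>V. (u, v) \<in> {(x, y). x \<in> V \<and> y \<in> V \<and> 0 < A x y}\<^sup>*)"

definition lap_eigenvalue :: "'v set \<Rightarrow> ('v \<Rightarrow> 'v \<Rightarrow> nat) \<Rightarrow> nat \<Rightarrow> real \<Rightarrow> bool" where
  "lap_eigenvalue V A r mu \<longleftrightarrow>
     (\<exists>f :: 'v \<Rightarrow> real. (\<exists>v\<in>V. f v \<noteq> 0) \<and>
        (\<forall>v\<in>V. real r * f v - (\<Sum>w\<in>V. real (A v w) * f w) = mu * f v))"

definition lambda1 :: "'v set \<Rightarrow> ('v \<Rightarrow> 'v \<Rightarrow> nat) \<Rightarrow> nat \<Rightarrow> real" where
  "lambda1 V A r = Min {mu. lap_eigenvalue V A r mu \<and> mu \<noteq> 0}"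

text \<open>The spectral bound is only required for graphs with at least two vertices, since a
  one-vertex graph has no nonzero Laplacian eigenvalue.\<close>
definition esperantist :: "'i set \<Rightarrow> ('i \<Rightarrow> 'v set) \<Rightarrow> ('i \<Rightarrow> 'v \<Rightarrow> 'v \<Rightarrow> nat) \<Rightarrow> nat \<Rightarrow> bool" where
  "esperantist I V A r \<longleftrightarrow>
     (\<forall>i\<in>I. regular_graph (V i) (A i) r \<and> connected_graph (V i) (A i)) \<and>
     (\<forall>n::nat. finite {i \<in> I. card (V i) \<le> n}) \<and>
     (\<exists>c::real. \<exists>a::real. c > 0 \<and> a \<ge> 0 \<and>
        (\<forall>i\<in>I. card (V i) \<ge> 2 \<longrightarrow>
           lambda1 (V i) (A i) r \<ge> c / (ln (2 * real (card (V i)))) powr a))"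

definition schreier_vertices :: "('g, 'b) monoid_scheme \<Rightarrow> 'g set \<Rightarrow> 'g set set" where
  "schreier_vertices G H = lcosets\<^bsub>G\<^esub> H"

definition schreier_adj :: "('g, 'b) monoid_scheme \<Rightarrow> 'g set \<Rightarrow> 'g set \<Rightarrow> 'g set \<Rightarrow> nat" where
  "schreier_adj G S u v = card {s \<in> S. s <#\<^bsub>G\<^esub> u = v}"

definition cayley_vertices :: "('g, 'b) monoid_scheme \<Rightarrow> 'g set set" where
  "cayley_vertices G = schreier_vertices G {\<one>\<^bsub>G\<^esub>}"

definition symmetric_generating_set :: "('g, 'b) monoid_scheme \<Rightarrow> 'g set \<Rightarrow> bool" where
  "symmetric_generating_set G S \<longleftrightarrow> finite S \<and> S \<subseteq> carrier G \<and>
     (\<forall>s\<in>S. inv\<^bsub>G\<^esub> s \<in> S) \<and> generate G S = carrier G"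

end

theory Submission
  imports Defs "Jordan_Normal_Form.Spectral_Radius"
begin

lemma sum_bij_reindex:
  assumes h: "bij_betw h {0..<n} W"
  shows "(\<Sum>j\<in>{0..<n}. g (h j)) = (\<Sum>w\<in>W. g w)"
  using sum.reindex_bij_betw[OF h] by simp

lemma fun_eig_iff_mat:
  fixes F :: "'v \<Rightarrow> 'v \<Rightarrow> 'a::field"
  assumes h: "bij_betw h {0..<n} W"
  shows "(\<exists>f. (\<exists>v\<in>W. f v \<noteq> 0) \<and> (\<forall>v\<in>W. (\<Sum>w\<in>W. F v w * f w) = \<mu> * f v))
     \<longleftrightarrow> eigenvalue (mat n n (\<lambda>(i,j). F (h i) (h j))) \<mu>"
  (is "?L \<longleftrightarrow> eigenvalue ?M \<mu>")
proof
  assume ?L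
  then obtain f where f0: "\<exists>v\<in>W. f v \<noteq> 0" and fe: "\<forall>v\<in>W. (\<Sum>w\<in>W. F v w * f w) = \<mu> * f v" by blast
  define x where "x = vec n (\<lambda>i. f (h i))"
  have xc: "x \<in> carrier_vec n" unfolding x_def by simp
  have xn: "x \<noteq> 0\<^sub>v n"
  proof
    assume "x = 0\<^sub>v n"
    from f0 obtain v where v: "v \<in> W" "f v \<noteq> 0" by blast
    then obtain i where i: "i < n" "h i = v" using h unfolding bij_betw_def by auto
    have "x $ i = 0" using \<open>x = 0\<^sub>v n\<close> i by simp
    thus False using i v unfolding x_def by simp
  qed
  have "?M *\<^sub>v x = \<mu> \<cdot>\<^sub>v x"
  proof (rule eq_vecI)
    fix i assume "i < dim_vec (\<mu> \<cdot>\<^sub>v x)"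
    hence i: "i < n" unfolding x_def by simp
    have hi: "h i \<in> W" using h i unfolding bij_betw_def by auto
    have "(?M *\<^sub>v x) $ i = (\<Sum>j\<in>{0..<n}. F (h i) (h j) * f (h j))"
      using i unfolding x_def by (simp add: scalar_prod_def row_def)
    also have "\<dots> = (\<Sum>w\<in>W. F (h i) w * f w)" by (rule sum_bij_reindex[OF h])
    also have "\<dots> = \<mu> * f (h i)" using fe hi by blast
    finally show "(?M *\<^sub>v x) $ i = (\<mu> \<cdot>\<^sub>v x) $ i" using i unfolding x_def by simp
  qed (simp add: x_def)
  thus "eigenvalue ?M \<mu>" unfolding eigenvalue_def eigenvector_def using xc xn by auto
next
  assume "eigenvalue ?M \<mu>"
  then obtain x where xc: "x \<in> carrier_vec n" and xn: "x \<noteq> 0\<^sub>v n" and ev: "?M *\<^sub>v x = \<mu> \<cdot>\<^sub>v x"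
    unfolding eigenvalue_def eigenvector_def by auto
  define g where "g = inv_into {0..<n} h"
  have gh: "\<And>i. i < n \<Longrightarrow> g (h i) = i" unfolding g_def using h
    by (simp add: bij_betw_def inv_into_f_f)
  define f where "f w = x $ g w" for w
  have fh: "\<And>i. i < n \<Longrightarrow> f (h i) = x $ i" unfolding f_def using gh by simp
  have "\<exists>v\<in>W. f v \<noteq> 0"
  proof (rule ccontr)
    assume "\<not> ?thesis"
    hence "\<forall>i<n. x $ i = 0" using fh h unfolding bij_betw_def by force
    hence "x = 0\<^sub>v n" using xc by (intro eq_vecI) auto
    thus False using xn by simp
  qed
  moreover have "\<forall>v\<in>W. (\<Sum>w\<in>W. F v w * f w) = \<mu> * f v"
  proof
    fix v assume v: "v \<in> W"
    then obtain i where i: "i < n" "h i = v" using h unfolding bij_betw_def by auto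
    have "(\<Sum>w\<in>W. F v w * f w) = (\<Sum>j\<in>{0..<n}. F (h i) (h j) * f (h j))"
      using sum_bij_reindex[OF h, of "\<lambda>w. F (h i) w * f w"] i by simp
    also have "\<dots> = (\<Sum>j\<in>{0..<n}. F (h i) (h j) * x $ j)" using fh by simp
    also have "\<dots> = (?M *\<^sub>v x) $ i" using i xc by (simp add: scalar_prod_def row_def)
    also have "\<dots> = \<mu> * x $ i" using ev i xc by simp
    finally show "(\<Sum>w\<in>W. F v w * f w) = \<mu> * f v" using fh[OF i(1)] i(2) by simp
  qed
  ultimately show ?L by blast
qed

lemma fun_eig_finite:
  fixes F :: "'v \<Rightarrow> 'v \<Rightarrow> 'a::field"
  assumes "finite W"
  shows "finite {\<mu>. \<exists>f. (\<exists>v\<in>W. f v \<noteq> 0) \<and> (\<forall>v\<in>W. (\<Sum>w\<in>W. F v w * f w) = \<mu> * f v)}"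
proof -
  obtain h where h: "bij_betw h {0..<card W} W" using ex_bij_betw_nat_finite[OF assms] by blast
  let ?M = "mat (card W) (card W) (\<lambda>(i,j). F (h i) (h j))"
  have "finite (spectrum ?M)" by (rule card_finite_spectrum[of _ "card W"]) simp
  thus ?thesis unfolding spectrum_def fun_eig_iff_mat[OF h] by simp
qed

lemma fun_eig_exists:
  fixes F :: "'v \<Rightarrow> 'v \<Rightarrow> complex"
  assumes "finite W" "W \<noteq> {}"
  shows "\<exists>\<mu> f. (\<exists>v\<in>W. f v \<noteq> 0) \<and> (\<forall>v\<in>W. (\<Sum>w\<in>W. F v w * f w) = \<mu> * f v)"
proof -
  obtain h where h: "bij_betw h {0..<card W} W" using ex_bij_betw_nat_finite[OF assms(1)] by blast
  let ?M = "mat (card W) (card W) (\<lambda>(i,j). F (h i) (h j))"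
  have "spectrum ?M \<noteq> {}" by (rule spectrum_non_empty[of _ "card W"]) (use assms in auto)
  thus ?thesis unfolding spectrum_def fun_eig_iff_mat[OF h] by auto
qed


definition lapm :: "('v \<Rightarrow> 'v \<Rightarrow> nat) \<Rightarrow> nat \<Rightarrow> 'v \<Rightarrow> 'v \<Rightarrow> real" where
  "lapm A r u w = (if u = w then real r else 0) - real (A u w)"

lemma lapm_sum:
  assumes "finite V" "v \<in> V"
  shows "(\<Sum>w\<in>V. lapm A r v w * f w) = real r * f v - (\<Sum>w\<in>V. real (A v w) * f w)"
proof -
  have "(\<Sum>w\<in>V. lapm A r v w * f w) = (\<Sum>w\<in>V. (if v = w then real r * f w else 0)) - (\<Sum>w\<in>V. real (A v w) * f w)"
    unfolding lapm_def sum_subtractf[symmetric] by (intro sum.cong) (auto simp: algebra_simps)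
  also have "(\<Sum>w\<in>V. (if v = w then real r * f w else 0)) = real r * f v"
    using assms by (simp add: sum.delta)
  finally show ?thesis .
qed

lemma reg_rowsum:
  assumes "regular_graph V A r" "v \<in> V"
  shows "(\<Sum>w\<in>V. real (A v w)) = real r"
  using assms unfolding regular_graph_def by (metis of_nat_sum)

lemma lapm_sym:
  assumes "regular_graph V A r" "u \<in> V" "w \<in> V"
  shows "lapm A r u w = lapm A r w u"
  using assms unfolding regular_graph_def lapm_def by auto

lemma lapm_colsum:
  assumes reg: "regular_graph V A r" and w: "w \<in> V"
  shows "(\<Sum>u\<in>V. lapm A r u w) = 0"
proof -
  have fin: "finite V" using reg unfolding regular_graph_def by auto
  have "(\<Sum>u\<in>V. lapm A r u w) = (\<Sum>u\<in>V. lapm A r w u * 1)"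
    using lapm_sym[OF reg _ w] by simp
  also have "\<dots> = real r * 1 - (\<Sum>u\<in>V. real (A w u) * 1)" by (rule lapm_sum[OF fin w])
  also have "\<dots> = 0" using reg_rowsum[OF reg w] by simp
  finally show ?thesis .
qed

lemma lapm_symsum:
  assumes reg: "regular_graph V A r"
  shows "(\<Sum>u\<in>V. b u * (\<Sum>w\<in>V. lapm A r u w * a w)) = (\<Sum>u\<in>V. a u * (\<Sum>w\<in>V. lapm A r u w * b w))"
proof -
  have "(\<Sum>u\<in>V. b u * (\<Sum>w\<in>V. lapm A r u w * a w)) = (\<Sum>u\<in>V. \<Sum>w\<in>V. b u * lapm A r u w * a w)"
    by (simp add: sum_distrib_left mult.assoc)
  also have "\<dots> = (\<Sum>w\<in>V. \<Sum>u\<in>V. b u * lapm A r u w * a w)" by (rule sum.swap)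
  also have "\<dots> = (\<Sum>w\<in>V. \<Sum>u\<in>V. a w * lapm A r w u * b u)"
    by (intro sum.cong refl) (simp add: lapm_sym[OF reg] mult.commute mult.left_commute)
  also have "\<dots> = (\<Sum>u\<in>V. a u * (\<Sum>w\<in>V. lapm A r u w * b w))"
    by (simp add: sum_distrib_left mult.assoc)
  finally show ?thesis .
qed

lemma max_principle:
  assumes reg: "regular_graph V A r" and conn: "connected_graph V A"
    and h: "\<forall>u\<in>V. real r * k u - (\<Sum>w\<in>V. real (A u w) * k w) = 0"
  shows "\<forall>u\<in>V. \<forall>v\<in>V. k u = k v"
proof -
  have fin: "finite V" and ne: "V \<noteq> {}" using reg unfolding regular_graph_def by auto
  define m where "m = Max (k ` V)"
  have "m \<in> k ` V" unfolding m_def using fin ne by simp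
  then obtain u0 where u0: "u0 \<in> V" "k u0 = m" by auto
  have le: "\<forall>v\<in>V. k v \<le> m" unfolding m_def using fin by simp
  have stp: "k y = m" if x: "x \<in> V" "k x = m" and y: "y \<in> V" "0 < A x y" for x y
  proof -
    have "(\<Sum>w\<in>V. real (A x w) * (m - k w)) = m * (\<Sum>w\<in>V. real (A x w)) - (\<Sum>w\<in>V. real (A x w) * k w)"
      unfolding sum_distrib_left sum_subtractf[symmetric] by (intro sum.cong) (auto simp: algebra_simps)
    also have "\<dots> = 0" using reg_rowsum[OF reg x(1)] h x(1) x(2)[symmetric] by (simp add: mult.commute)
    finally have z: "(\<Sum>w\<in>V. real (A x w) * (m - k w)) = 0" .
    have "\<forall>w\<in>V. real (A x w) * (m - k w) = 0"
    proof (rule sum_nonneg_eq_0_iff[OF fin, THEN iffD1, OF _ z])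
      fix w assume "w \<in> V" thus "0 \<le> real (A x w) * (m - k w)" using le by simp
    qed
    thus ?thesis using y by auto
  qed
  have "k v = m" if "v \<in> V" for v
  proof -
    have "(u0, v) \<in> {(x, y). x \<in> V \<and> y \<in> V \<and> 0 < A x y}\<^sup>*"
      using conn u0 that unfolding connected_graph_def by blast
    thus ?thesis
    proof (induction rule: rtrancl_induct)
      case base thus ?case using u0 by simp
    next
      case (step y z) thus ?case using stp by auto
    qed
  qed
  thus ?thesis by auto
qed


lemma deflate:
  assumes reg: "regular_graph V A r" and v0: "v0 \<in> V"
    and c: "\<forall>u\<in>V - {v0}. (\<Sum>w\<in>V - {v0}. (lapm A r u w - lapm A r u v0) * c w) = d u"
  shows "\<forall>u\<in>V. (\<Sum>w\<in>V. lapm A r u w * (if w = v0 then - (\<Sum>x\<in>V - {v0}. c x) else c w))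
           = (if u = v0 then - (\<Sum>x\<in>V - {v0}. d x) else d u)"
proof -
  have fin: "finite V" using reg unfolding regular_graph_def by auto
  define e where "e w = (if w = v0 then - (\<Sum>x\<in>V - {v0}. c x) else c w)" for w
  let ?W = "V - {v0}"
  have inW: "(\<Sum>w\<in>V. lapm A r u w * e w) = d u" if u: "u \<in> ?W" for u
  proof -
    have "(\<Sum>w\<in>V. lapm A r u w * e w) = lapm A r u v0 * e v0 + (\<Sum>w\<in>?W. lapm A r u w * e w)"
      by (rule sum.remove[OF fin v0])
    also have "(\<Sum>w\<in>?W. lapm A r u w * e w) = (\<Sum>w\<in>?W. lapm A r u w * c w)"
      unfolding e_def by (intro sum.cong) auto
    also have "lapm A r u v0 * e v0 = - (\<Sum>w\<in>?W. lapm A r u v0 * c w)"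
      unfolding e_def by (simp add: sum_distrib_left)
    also have "- (\<Sum>w\<in>?W. lapm A r u v0 * c w) + (\<Sum>w\<in>?W. lapm A r u w * c w)
        = (\<Sum>w\<in>?W. (lapm A r u w - lapm A r u v0) * c w)"
      by (simp add: sum_subtractf left_diff_distrib)
    also have "\<dots> = d u" using c u by blast
    finally show ?thesis .
  qed
  have tot: "(\<Sum>u\<in>V. \<Sum>w\<in>V. lapm A r u w * e w) = 0"
  proof -
    have "(\<Sum>u\<in>V. \<Sum>w\<in>V. lapm A r u w * e w) = (\<Sum>w\<in>V. \<Sum>u\<in>V. lapm A r u w * e w)" by (rule sum.swap)
    also have "\<dots> = (\<Sum>w\<in>V. e w * (\<Sum>u\<in>V. lapm A r u w))" by (simp add: sum_distrib_left mult.commute)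
    also have "\<dots> = 0" by (rule sum.neutral) (simp add: lapm_colsum[OF reg])
    finally show ?thesis .
  qed
  have "(\<Sum>u\<in>V. \<Sum>w\<in>V. lapm A r u w * e w) = (\<Sum>w\<in>V. lapm A r v0 w * e w) + (\<Sum>u\<in>?W. \<Sum>w\<in>V. lapm A r u w * e w)"
    by (rule sum.remove[OF fin v0])
  also have "(\<Sum>u\<in>?W. \<Sum>w\<in>V. lapm A r u w * e w) = (\<Sum>u\<in>?W. d u)" by (rule sum.cong[OF refl inW])
  finally have "(\<Sum>w\<in>V. lapm A r v0 w * e w) = - (\<Sum>u\<in>?W. d u)" using tot by simp
  hence "(\<Sum>w\<in>V. lapm A r u w * e w) = (if u = v0 then - (\<Sum>x\<in>V - {v0}. d x) else d u)" if "u \<in> V" for u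
    using inW that by (cases "u = v0") simp_all
  thus ?thesis unfolding e_def by blast
qed

lemma ext_sum:
  fixes c :: "'v \<Rightarrow> real"
  assumes "finite V" "v0 \<in> V"
  shows "(\<Sum>w\<in>V. (if w = v0 then - (\<Sum>x\<in>V - {v0}. c x) else c w)) = 0"
proof -
  have "(\<Sum>w\<in>V. (if w = v0 then - (\<Sum>x\<in>V - {v0}. c x) else c w))
    = (if v0 = v0 then - (\<Sum>x\<in>V - {v0}. c x) else c v0) + (\<Sum>w\<in>V - {v0}. (if w = v0 then - (\<Sum>x\<in>V - {v0}. c x) else c w))"
    by (rule sum.remove[OF assms])
  also have "(\<Sum>w\<in>V - {v0}. (if w = v0 then - (\<Sum>x\<in>V - {v0}. c x) else c w)) = (\<Sum>w\<in>V - {v0}. c w)"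
    by (intro sum.cong) auto
  finally show ?thesis by simp
qed

lemma final_eig:
  assumes reg: "regular_graph V A r" and conn: "connected_graph V A"
    and eq: "\<forall>u\<in>V. (\<Sum>w\<in>V. lapm A r u w * k w) = \<alpha> * k u"
    and s0: "(\<Sum>w\<in>V. k w) = 0" and nz: "\<exists>v\<in>V. k v \<noteq> 0"
  shows "lap_eigenvalue V A r \<alpha> \<and> \<alpha> \<noteq> 0"
proof -
  have fin: "finite V" using reg unfolding regular_graph_def by auto
  have eq': "\<forall>u\<in>V. real r * k u - (\<Sum>w\<in>V. real (A u w) * k w) = \<alpha> * k u"
  proof
    fix u assume u: "u \<in> V"
    show "real r * k u - (\<Sum>w\<in>V. real (A u w) * k w) = \<alpha> * k u"
      using lapm_sum[OF fin u, of A r k] bspec[OF eq u] by linarith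
  qed
  have "lap_eigenvalue V A r \<alpha>" unfolding lap_eigenvalue_def by (rule exI[of _ k]) (use eq' nz in auto)
  moreover have "\<alpha> \<noteq> 0"
  proof
    assume "\<alpha> = 0"
    hence "\<forall>u\<in>V. real r * k u - (\<Sum>w\<in>V. real (A u w) * k w) = 0" using eq' by simp
    hence "\<forall>u\<in>V. \<forall>v\<in>V. k u = k v" by (rule max_principle[OF reg conn])
    from nz obtain v where v: "v \<in> V" "k v \<noteq> 0" by blast
    have "(\<Sum>w\<in>V. k w) = (\<Sum>w\<in>V. k v)" using \<open>\<forall>u\<in>V. \<forall>v\<in>V. k u = k v\<close> v by (intro sum.cong refl) blast
    also have "\<dots> = real (card V) * k v" by simp
    finally have "real (card V) * k v = 0" using s0 by simp
    moreover have "card V > 0" using fin v by (auto simp: card_gt_0_iff)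
    ultimately show False using v by simp
  qed
  ultimately show ?thesis by blast
qed


lemma lap_nonzero_exists:
  assumes reg: "regular_graph V A r" and conn: "connected_graph V A" and card2: "2 \<le> card V"
  shows "\<exists>\<mu>. lap_eigenvalue V A r \<mu> \<and> \<mu> \<noteq> 0"
proof -
  have fin: "finite V" and ne: "V \<noteq> {}" using reg unfolding regular_graph_def by auto
  obtain v0 where v0: "v0 \<in> V" using ne by blast
  let ?W = "V - {v0}"
  have Wfin: "finite ?W" using fin by simp
  have cW: "card ?W = card V - 1" using fin v0 by simp
  have Wne: "?W \<noteq> {}"
  proof
    assume "?W = {}"
    hence "card ?W = 0" by (simp only: card.empty)
    with cW card2 show False by simp
  qed
  define B where "B u w = complex_of_real (lapm A r u w - lapm A r u v0)" for u w
  obtain lam y where y0: "\<exists>v\<in>?W. y v \<noteq> 0" and ye: "\<forall>u\<in>?W. (\<Sum>w\<in>?W. B u w * y w) = lam * y u"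
    using fun_eig_exists[OF Wfin Wne, of B] by blast
  define \<alpha> where "\<alpha> = Re lam"
  define \<beta> where "\<beta> = Im lam"
  have eRe: "\<forall>u\<in>?W. (\<Sum>w\<in>?W. (lapm A r u w - lapm A r u v0) * Re (y w)) = \<alpha> * Re (y u) - \<beta> * Im (y u)"
  proof
    fix u assume u: "u \<in> ?W"
    have "Re (\<Sum>w\<in>?W. B u w * y w) = Re (lam * y u)" using ye u by simp
    thus "(\<Sum>w\<in>?W. (lapm A r u w - lapm A r u v0) * Re (y w)) = \<alpha> * Re (y u) - \<beta> * Im (y u)"
      unfolding B_def \<alpha>_def \<beta>_def by simp
  qed
  have eIm: "\<forall>u\<in>?W. (\<Sum>w\<in>?W. (lapm A r u w - lapm A r u v0) * Im (y w)) = \<beta> * Re (y u) + \<alpha> * Im (y u)"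
  proof
    fix u assume u: "u \<in> ?W"
    have "Im (\<Sum>w\<in>?W. B u w * y w) = Im (lam * y u)" using ye u by simp
    thus "(\<Sum>w\<in>?W. (lapm A r u w - lapm A r u v0) * Im (y w)) = \<beta> * Re (y u) + \<alpha> * Im (y u)"
      unfolding B_def \<alpha>_def \<beta>_def by simp
  qed
  define a where "a w = (if w = v0 then - (\<Sum>x\<in>?W. Re (y x)) else Re (y w))" for w
  define b where "b w = (if w = v0 then - (\<Sum>x\<in>?W. Im (y x)) else Im (y w))" for w
  have LA0: "\<forall>u\<in>V. (\<Sum>w\<in>V. lapm A r u w * a w)
     = (if u = v0 then - (\<Sum>x\<in>?W. \<alpha> * Re (y x) - \<beta> * Im (y x)) else \<alpha> * Re (y u) - \<beta> * Im (y u))"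
    unfolding a_def by (rule deflate[OF reg v0 eRe])
  have LB0: "\<forall>u\<in>V. (\<Sum>w\<in>V. lapm A r u w * b w)
     = (if u = v0 then - (\<Sum>x\<in>?W. \<beta> * Re (y x) + \<alpha> * Im (y x)) else \<beta> * Re (y u) + \<alpha> * Im (y u))"
    unfolding b_def by (rule deflate[OF reg v0 eIm])
  have LA: "\<forall>u\<in>V. (\<Sum>w\<in>V. lapm A r u w * a w) = \<alpha> * a u - \<beta> * b u"
  proof
    fix u assume u: "u \<in> V"
    show "(\<Sum>w\<in>V. lapm A r u w * a w) = \<alpha> * a u - \<beta> * b u"
    proof (cases "u = v0")
      case True
      have "(\<Sum>x\<in>?W. \<alpha> * Re (y x) - \<beta> * Im (y x)) = \<alpha> * (\<Sum>x\<in>?W. Re (y x)) - \<beta> * (\<Sum>x\<in>?W. Im (y x))"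
        by (simp add: sum_subtractf sum_distrib_left)
      thus ?thesis using LA0 u True unfolding a_def b_def by simp
    next
      case False thus ?thesis using LA0 u unfolding a_def b_def by simp
    qed
  qed
  have LB: "\<forall>u\<in>V. (\<Sum>w\<in>V. lapm A r u w * b w) = \<beta> * a u + \<alpha> * b u"
  proof
    fix u assume u: "u \<in> V"
    show "(\<Sum>w\<in>V. lapm A r u w * b w) = \<beta> * a u + \<alpha> * b u"
    proof (cases "u = v0")
      case True
      have "(\<Sum>x\<in>?W. \<beta> * Re (y x) + \<alpha> * Im (y x)) = \<beta> * (\<Sum>x\<in>?W. Re (y x)) + \<alpha> * (\<Sum>x\<in>?W. Im (y x))"
        by (simp add: sum.distrib sum_distrib_left)
      thus ?thesis using LB0 u True unfolding a_def b_def by simp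
    next
      case False thus ?thesis using LB0 u unfolding a_def b_def by simp
    qed
  qed
  have sym: "(\<Sum>u\<in>V. b u * (\<Sum>w\<in>V. lapm A r u w * a w)) = (\<Sum>u\<in>V. a u * (\<Sum>w\<in>V. lapm A r u w * b w))"
    by (rule lapm_symsum[OF reg])
  have s1: "(\<Sum>u\<in>V. b u * (\<Sum>w\<in>V. lapm A r u w * a w)) = \<alpha> * (\<Sum>u\<in>V. a u * b u) - \<beta> * (\<Sum>u\<in>V. b u * b u)"
  proof -
    have "(\<Sum>u\<in>V. b u * (\<Sum>w\<in>V. lapm A r u w * a w)) = (\<Sum>u\<in>V. \<alpha> * (a u * b u) - \<beta> * (b u * b u))"
    proof (intro sum.cong refl)
      fix u assume "u \<in> V"
      hence e: "(\<Sum>w\<in>V. lapm A r u w * a w) = \<alpha> * a u - \<beta> * b u" using LA by blast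
      show "b u * (\<Sum>w\<in>V. lapm A r u w * a w) = \<alpha> * (a u * b u) - \<beta> * (b u * b u)"
        unfolding e by (simp add: algebra_simps)
    qed
    thus ?thesis by (simp add: sum_subtractf sum_distrib_left)
  qed
  have s2: "(\<Sum>u\<in>V. a u * (\<Sum>w\<in>V. lapm A r u w * b w)) = \<beta> * (\<Sum>u\<in>V. a u * a u) + \<alpha> * (\<Sum>u\<in>V. a u * b u)"
  proof -
    have "(\<Sum>u\<in>V. a u * (\<Sum>w\<in>V. lapm A r u w * b w)) = (\<Sum>u\<in>V. \<beta> * (a u * a u) + \<alpha> * (a u * b u))"
    proof (intro sum.cong refl)
      fix u assume "u \<in> V"
      hence e: "(\<Sum>w\<in>V. lapm A r u w * b w) = \<beta> * a u + \<alpha> * b u" using LB by blast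
      show "a u * (\<Sum>w\<in>V. lapm A r u w * b w) = \<beta> * (a u * a u) + \<alpha> * (a u * b u)"
        unfolding e by (simp add: algebra_simps)
    qed
    thus ?thesis by (simp add: sum.distrib sum_distrib_left)
  qed
  have "\<beta> * ((\<Sum>u\<in>V. a u * a u) + (\<Sum>u\<in>V. b u * b u)) = 0"
    using sym s1 s2 by (simp add: algebra_simps)
  moreover obtain v where v: "v \<in> ?W" "y v \<noteq> 0" using y0 by blast
  have abv: "a v \<noteq> 0 \<or> b v \<noteq> 0" using v unfolding a_def b_def by (auto simp: complex_eq_iff)
  have pos: "(\<Sum>u\<in>V. a u * a u) + (\<Sum>u\<in>V. b u * b u) > 0"
  proof -
    have "(\<Sum>u\<in>V. a u * a u) + (\<Sum>u\<in>V. b u * b u) = (\<Sum>u\<in>V. a u * a u + b u * b u)" by (simp add: sum.distrib)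
    also have "\<dots> > 0"
    proof (rule sum_pos2[OF fin])
      show "v \<in> V" using v by simp
      show "0 < a v * a v + b v * b v" using abv
        by (metis add_nonneg_pos add_pos_nonneg zero_le_square not_real_square_gt_zero)
      show "\<And>i. i \<in> V \<Longrightarrow> 0 \<le> a i * a i + b i * b i" by simp
    qed
    finally show ?thesis .
  qed
  ultimately have b0: "\<beta> = 0" by simp
  have vV: "v \<in> V" using v by simp
  show ?thesis
  proof (cases "a v \<noteq> 0")
    case True
    have "lap_eigenvalue V A r \<alpha> \<and> \<alpha> \<noteq> 0"
    proof (rule final_eig[OF reg conn])
      show "\<forall>u\<in>V. (\<Sum>w\<in>V. lapm A r u w * a w) = \<alpha> * a u" using LA b0 by simp
      show "(\<Sum>w\<in>V. a w) = 0" unfolding a_def by (rule ext_sum[OF fin v0])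
      show "\<exists>v\<in>V. a v \<noteq> 0" using True vV by blast
    qed
    thus ?thesis by blast
  next
    case False
    have "lap_eigenvalue V A r \<alpha> \<and> \<alpha> \<noteq> 0"
    proof (rule final_eig[OF reg conn])
      show "\<forall>u\<in>V. (\<Sum>w\<in>V. lapm A r u w * b w) = \<alpha> * b u" using LB b0 by simp
      show "(\<Sum>w\<in>V. b w) = 0" unfolding b_def by (rule ext_sum[OF fin v0])
      show "\<exists>v\<in>V. b v \<noteq> 0" using False abv vV by blast
    qed
    thus ?thesis by blast
  qed
qed


lemma fiber_sum:
  fixes F :: "'w \<Rightarrow> real"
  assumes finV: "finite V" and finS: "finite S" and img: "g ` S \<subseteq> V"
  shows "(\<Sum>w\<in>V. real (card {s\<in>S. g s = w}) * F w) = (\<Sum>s\<in>S. F (g s))"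
proof -
  have "(\<Sum>s\<in>S. F (g s)) = (\<Sum>s\<in>S. \<Sum>w\<in>V. (if g s = w then F w else 0))"
  proof (intro sum.cong refl)
    fix s assume "s \<in> S"
    hence "g s \<in> V" using img by blast
    thus "F (g s) = (\<Sum>w\<in>V. (if g s = w then F w else 0))" using finV by (simp add: sum.delta)
  qed
  also have "\<dots> = (\<Sum>w\<in>V. \<Sum>s\<in>S. (if g s = w then F w else 0))" by (rule sum.swap)
  also have "\<dots> = (\<Sum>w\<in>V. real (card {s\<in>S. g s = w}) * F w)"
  proof (intro sum.cong refl)
    fix w
    have "(\<Sum>s\<in>S. (if g s = w then F w else 0)) = (\<Sum>s\<in>{s\<in>S. g s = w}. F w)"
      using sum.inter_filter[OF finS, of "\<lambda>_. F w" "\<lambda>s. g s = w"] by simp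
    also have "\<dots> = real (card {s\<in>S. g s = w}) * F w" by simp
    finally show "(\<Sum>s\<in>S. (if g s = w then F w else 0)) = real (card {s\<in>S. g s = w}) * F w" .
  qed
  finally show ?thesis by simp
qed

lemma fiber_card:
  assumes finV: "finite V" and finS: "finite S" and img: "g ` S \<subseteq> V"
  shows "(\<Sum>w\<in>V. card {s\<in>S. g s = w}) = card S"
proof -
  have "real (\<Sum>w\<in>V. card {s\<in>S. g s = w}) = (\<Sum>w\<in>V. real (card {s\<in>S. g s = w}) * 1)"
    by simp
  also have "\<dots> = (\<Sum>s\<in>S. 1)" by (rule fiber_sum[OF assms])
  also have "\<dots> = real (card S)" by simp
  finally show ?thesis by linarith
qed

lemma lcos_closed:
  assumes grp: "group G" and N: "subgroup N G" and u: "u \<in> lcosets\<^bsub>G\<^esub> N" and s: "s \<in> carrier G"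
  shows "s <#\<^bsub>G\<^esub> u \<in> lcosets\<^bsub>G\<^esub> N"
proof -
  obtain x where x: "x \<in> carrier G" "u = x <#\<^bsub>G\<^esub> N" using u unfolding LCOSETS_def by blast
  have "s <#\<^bsub>G\<^esub> u = (s \<otimes>\<^bsub>G\<^esub> x) <#\<^bsub>G\<^esub> N"
    using group.lcos_m_assoc[OF grp subgroup.subset[OF N] s x(1)] x(2) by simp
  moreover have "s \<otimes>\<^bsub>G\<^esub> x \<in> carrier G" using grp s x by (simp add: group.is_monoid monoid.m_closed)
  ultimately show ?thesis unfolding LCOSETS_def by blast
qed

lemma lcos_inv_cancel:
  assumes grp: "group G" and M: "M \<subseteq> carrier G" and s: "s \<in> carrier G"
  shows "inv\<^bsub>G\<^esub> s <#\<^bsub>G\<^esub> (s <#\<^bsub>G\<^esub> M) = M"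
proof -
  have i: "inv\<^bsub>G\<^esub> s \<in> carrier G" using grp s by (simp add: group.inv_closed)
  have "inv\<^bsub>G\<^esub> s <#\<^bsub>G\<^esub> (s <#\<^bsub>G\<^esub> M) = (inv\<^bsub>G\<^esub> s \<otimes>\<^bsub>G\<^esub> s) <#\<^bsub>G\<^esub> M"
    by (rule group.lcos_m_assoc[OF grp M i s])
  also have "inv\<^bsub>G\<^esub> s \<otimes>\<^bsub>G\<^esub> s = \<one>\<^bsub>G\<^esub>" using grp s by (simp add: group.l_inv)
  also have "\<one>\<^bsub>G\<^esub> <#\<^bsub>G\<^esub> M = M" by (rule group.lcos_mult_one[OF grp M])
  finally show ?thesis .
qed

lemma adj_sym:
  assumes grp: "group G" and sg: "symmetric_generating_set G S"
    and u: "u \<subseteq> carrier G" and w: "w \<subseteq> carrier G"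
  shows "schreier_adj G S u w = schreier_adj G S w u"
proof -
  have SG: "S \<subseteq> carrier G" and Sinv: "\<forall>s\<in>S. inv\<^bsub>G\<^esub> s \<in> S" using sg unfolding symmetric_generating_set_def by auto
  have inj: "inj_on (\<lambda>s. inv\<^bsub>G\<^esub> s) {s\<in>S. s <#\<^bsub>G\<^esub> u = w}"
    by (rule inj_onI) (use SG grp in \<open>metis (no_types, lifting) group.inv_inv mem_Collect_eq subsetD\<close>)
  have "(\<lambda>s. inv\<^bsub>G\<^esub> s) ` {s\<in>S. s <#\<^bsub>G\<^esub> u = w} = {s\<in>S. s <#\<^bsub>G\<^esub> w = u}"
  proof
    show "(\<lambda>s. inv\<^bsub>G\<^esub> s) ` {s\<in>S. s <#\<^bsub>G\<^esub> u = w} \<subseteq> {s\<in>S. s <#\<^bsub>G\<^esub> w = u}"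
    proof
      fix t assume "t \<in> (\<lambda>s. inv\<^bsub>G\<^esub> s) ` {s\<in>S. s <#\<^bsub>G\<^esub> u = w}"
      then obtain s where s: "s \<in> S" "s <#\<^bsub>G\<^esub> u = w" "t = inv\<^bsub>G\<^esub> s" by blast
      have "t <#\<^bsub>G\<^esub> w = u" using lcos_inv_cancel[OF grp u, of s] s SG by auto
      thus "t \<in> {s\<in>S. s <#\<^bsub>G\<^esub> w = u}" using s Sinv by auto
    qed
  next
    show "{s\<in>S. s <#\<^bsub>G\<^esub> w = u} \<subseteq> (\<lambda>s. inv\<^bsub>G\<^esub> s) ` {s\<in>S. s <#\<^bsub>G\<^esub> u = w}"
    proof
      fix t assume t: "t \<in> {s\<in>S. s <#\<^bsub>G\<^esub> w = u}"
      have tc: "t \<in> carrier G" using t SG by auto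
      have "inv\<^bsub>G\<^esub> t <#\<^bsub>G\<^esub> u = w" using lcos_inv_cancel[OF grp w tc] t by auto
      moreover have "t = inv\<^bsub>G\<^esub> (inv\<^bsub>G\<^esub> t)" using grp tc by (simp add: group.inv_inv)
      ultimately show "t \<in> (\<lambda>s. inv\<^bsub>G\<^esub> s) ` {s\<in>S. s <#\<^bsub>G\<^esub> u = w}" using t Sinv by blast
    qed
  qed
  thus ?thesis unfolding schreier_adj_def using card_image[OF inj] by simp
qed


lemma cay_vert:
  assumes grp: "group G"
  shows "cayley_vertices G = (\<lambda>x. {x}) ` carrier G"
  unfolding cayley_vertices_def schreier_vertices_def LCOSETS_def
  using grp by (auto simp: l_coset_def group.is_monoid monoid.r_one)

lemma schreier_regular:
  assumes grp: "group G" and fin: "finite (carrier G)" and sg: "symmetric_generating_set G S"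
    and N: "subgroup N G" and r: "card S = r"
  shows "regular_graph (schreier_vertices G N) (schreier_adj G S) r"
proof -
  let ?V = "schreier_vertices G N"
  have SG: "S \<subseteq> carrier G" and finS: "finite S" using sg unfolding symmetric_generating_set_def by auto
  have sub: "\<And>u. u \<in> ?V \<Longrightarrow> u \<subseteq> carrier G"
    unfolding schreier_vertices_def using subgroup.lcosets_carrier[OF N grp] by blast
  have finV: "finite ?V" unfolding schreier_vertices_def LCOSETS_def using fin by auto
  have "N \<in> ?V"
  proof -
    have "\<one>\<^bsub>G\<^esub> <#\<^bsub>G\<^esub> N = N" by (rule group.lcos_mult_one[OF grp subgroup.subset[OF N]])
    moreover have "\<one>\<^bsub>G\<^esub> \<in> carrier G" using grp by (simp add: group.is_monoid monoid.one_closed)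
    ultimately show ?thesis unfolding schreier_vertices_def LCOSETS_def by force
  qed
  hence neV: "?V \<noteq> {}" by blast
  have img: "\<And>u. u \<in> ?V \<Longrightarrow> (\<lambda>s. s <#\<^bsub>G\<^esub> u) ` S \<subseteq> ?V"
    unfolding schreier_vertices_def using lcos_closed[OF grp N] SG by blast
  have symm: "\<forall>u\<in>?V. \<forall>w\<in>?V. schreier_adj G S u w = schreier_adj G S w u"
    using adj_sym[OF grp sg] sub by blast
  have clos: "\<forall>u\<in>?V. \<forall>w. 0 < schreier_adj G S u w \<longrightarrow> w \<in> ?V"
  proof (intro ballI allI impI)
    fix u w assume u: "u \<in> ?V" and p: "0 < schreier_adj G S u w"
    hence "{s\<in>S. s <#\<^bsub>G\<^esub> u = w} \<noteq> {}" unfolding schreier_adj_def by (metis card.empty less_irrefl)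
    then obtain s where "s \<in> S" "s <#\<^bsub>G\<^esub> u = w" by blast
    thus "w \<in> ?V" using img[OF u] by blast
  qed
  have rows: "\<forall>v\<in>?V. (\<Sum>w\<in>?V. schreier_adj G S v w) = r"
  proof
    fix v assume v: "v \<in> ?V"
    show "(\<Sum>w\<in>?V. schreier_adj G S v w) = r"
      unfolding schreier_adj_def using fiber_card[OF finV finS img[OF v]] r by simp
  qed
  show ?thesis unfolding regular_graph_def using finV neV symm clos rows by blast
qed

lemma schreier_connected:
  assumes grp: "group G" and sg: "symmetric_generating_set G S" and N: "subgroup N G"
    and connC: "connected_graph (cayley_vertices G) (schreier_adj G S)"
  shows "connected_graph (schreier_vertices G N) (schreier_adj G S)"
proof -
  let ?VC = "cayley_vertices G" and ?V = "schreier_vertices G N"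
  let ?RC = "{(x, y). x \<in> ?VC \<and> y \<in> ?VC \<and> 0 < schreier_adj G S x y}"
  let ?RS = "{(x, y). x \<in> ?V \<and> y \<in> ?V \<and> 0 < schreier_adj G S x y}"
  have SG: "S \<subseteq> carrier G" and finS: "finite S" using sg unfolding symmetric_generating_set_def by auto
  define \<pi> where "\<pi> w = the_elem w <#\<^bsub>G\<^esub> N" for w
  have NC: "N \<subseteq> carrier G" by (rule subgroup.subset[OF N])
  have piV: "\<pi> {x} \<in> ?V" if "x \<in> carrier G" for x
    unfolding \<pi>_def schreier_vertices_def LCOSETS_def using that by auto
  have edge: "(\<pi> p, \<pi> q) \<in> ?RS" if "(p, q) \<in> ?RC" for p q
  proof -
    from that have p: "p \<in> ?VC" and q: "q \<in> ?VC" and pos: "0 < schreier_adj G S p q" by auto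
    obtain a where a: "a \<in> carrier G" "p = {a}" using p cay_vert[OF grp] by auto
    from pos have "{s\<in>S. s <#\<^bsub>G\<^esub> p = q} \<noteq> {}" unfolding schreier_adj_def by (metis card.empty less_irrefl)
    then obtain s where s: "s \<in> S" "s <#\<^bsub>G\<^esub> p = q" by blast
    have sc: "s \<in> carrier G" using s SG by auto
    have q': "q = {s \<otimes>\<^bsub>G\<^esub> a}" using s(2) a(2) by (simp add: l_coset_def)
    have "\<pi> q = (s \<otimes>\<^bsub>G\<^esub> a) <#\<^bsub>G\<^esub> N" unfolding \<pi>_def q' by simp
    also have "\<dots> = s <#\<^bsub>G\<^esub> \<pi> p" unfolding \<pi>_def a(2)
      using group.lcos_m_assoc[OF grp NC sc a(1)] by simp
    finally have eq: "s <#\<^bsub>G\<^esub> \<pi> p = \<pi> q" by simp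
    have "s \<in> {t\<in>S. t <#\<^bsub>G\<^esub> \<pi> p = \<pi> q}" using s eq by simp
    moreover have "finite {t\<in>S. t <#\<^bsub>G\<^esub> \<pi> p = \<pi> q}" using finS by simp
    ultimately have "0 < schreier_adj G S (\<pi> p) (\<pi> q)" unfolding schreier_adj_def
      by (metis card_gt_0_iff empty_iff)
    moreover have "\<pi> p \<in> ?V" using a piV by simp
    moreover have "s \<otimes>\<^bsub>G\<^esub> a \<in> carrier G" using grp sc a by (simp add: group.is_monoid monoid.m_closed)
    hence "\<pi> q \<in> ?V" using q' piV by simp
    ultimately show ?thesis by simp
  qed
  have proj: "(\<pi> p, \<pi> q) \<in> ?RS\<^sup>*" if "(p, q) \<in> ?RC\<^sup>*" for p q
    using that
  proof (induction rule: rtrancl_induct)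
    case base thus ?case by simp
  next
    case (step y z) thus ?case using edge by (meson rtrancl.rtrancl_into_rtrancl)
  qed
  show ?thesis unfolding connected_graph_def
  proof (intro ballI)
    fix u v assume u: "u \<in> ?V" and v: "v \<in> ?V"
    obtain x where x: "x \<in> carrier G" "u = x <#\<^bsub>G\<^esub> N" using u unfolding schreier_vertices_def LCOSETS_def by blast
    obtain y where y: "y \<in> carrier G" "v = y <#\<^bsub>G\<^esub> N" using v unfolding schreier_vertices_def LCOSETS_def by blast
    have "({x}, {y}) \<in> ?RC\<^sup>*" using connC x(1) y(1) cay_vert[OF grp] unfolding connected_graph_def by blast
    hence "(\<pi> {x}, \<pi> {y}) \<in> ?RS\<^sup>*" by (rule proj)
    thus "(u, v) \<in> ?RS\<^sup>*" unfolding \<pi>_def using x y by simp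
  qed
qed

lemma pullback:
  assumes grp: "group G" and fin: "finite (carrier G)" and sg: "symmetric_generating_set G S"
    and N: "subgroup N G"
    and eig: "lap_eigenvalue (schreier_vertices G N) (schreier_adj G S) r \<mu>"
  shows "lap_eigenvalue (cayley_vertices G) (schreier_adj G S) r \<mu>"
proof -
  let ?VC = "cayley_vertices G" and ?V = "schreier_vertices G N"
  have SG: "S \<subseteq> carrier G" and finS: "finite S" using sg unfolding symmetric_generating_set_def by auto
  have NC: "N \<subseteq> carrier G" by (rule subgroup.subset[OF N])
  have finV: "finite ?V" unfolding schreier_vertices_def LCOSETS_def using fin by auto
  have finVC: "finite ?VC" using cay_vert[OF grp] fin by simp
  have img: "\<And>u. u \<in> ?V \<Longrightarrow> (\<lambda>s. s <#\<^bsub>G\<^esub> u) ` S \<subseteq> ?V"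
    unfolding schreier_vertices_def using lcos_closed[OF grp N] SG by blast
  from eig obtain F where F0: "\<exists>v\<in>?V. F v \<noteq> 0"
    and Fe: "\<forall>v\<in>?V. real r * F v - (\<Sum>w\<in>?V. real (schreier_adj G S v w) * F w) = \<mu> * F v"
    unfolding lap_eigenvalue_def by blast
  define f where "f w = F (the_elem w <#\<^bsub>G\<^esub> N)" for w
  have "\<exists>v\<in>?VC. f v \<noteq> 0"
  proof -
    from F0 obtain v where v: "v \<in> ?V" "F v \<noteq> 0" by blast
    then obtain x where x: "x \<in> carrier G" "v = x <#\<^bsub>G\<^esub> N" unfolding schreier_vertices_def LCOSETS_def by blast
    have "{x} \<in> ?VC" using x cay_vert[OF grp] by simp
    moreover have "f {x} \<noteq> 0" unfolding f_def using x v by simp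
    ultimately show ?thesis by blast
  qed
  moreover have "\<forall>v\<in>?VC. real r * f v - (\<Sum>w\<in>?VC. real (schreier_adj G S v w) * f w) = \<mu> * f v"
  proof
    fix v assume v: "v \<in> ?VC"
    then obtain x where x: "x \<in> carrier G" "v = {x}" using cay_vert[OF grp] by auto
    have xN: "x <#\<^bsub>G\<^esub> N \<in> ?V" unfolding schreier_vertices_def LCOSETS_def using x by auto
    have imgC: "(\<lambda>s. s <#\<^bsub>G\<^esub> v) ` S \<subseteq> ?VC"
    proof
      fix q assume "q \<in> (\<lambda>s. s <#\<^bsub>G\<^esub> v) ` S"
      then obtain s where s: "s \<in> S" "q = s <#\<^bsub>G\<^esub> v" by blast
      have "q = {s \<otimes>\<^bsub>G\<^esub> x}" using s x by (simp add: l_coset_def)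
      moreover have "s \<otimes>\<^bsub>G\<^esub> x \<in> carrier G" using grp s SG x by (auto simp: group.is_monoid monoid.m_closed)
      ultimately show "q \<in> ?VC" using cay_vert[OF grp] by simp
    qed
    have "(\<Sum>w\<in>?VC. real (schreier_adj G S v w) * f w) = (\<Sum>s\<in>S. f (s <#\<^bsub>G\<^esub> v))"
      unfolding schreier_adj_def by (rule fiber_sum[OF finVC finS imgC])
    also have "\<dots> = (\<Sum>s\<in>S. F (s <#\<^bsub>G\<^esub> (x <#\<^bsub>G\<^esub> N)))"
    proof (intro sum.cong refl)
      fix s assume s: "s \<in> S"
      hence sc: "s \<in> carrier G" using SG by auto
      have "s <#\<^bsub>G\<^esub> v = {s \<otimes>\<^bsub>G\<^esub> x}" using x by (simp add: l_coset_def)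
      hence "f (s <#\<^bsub>G\<^esub> v) = F ((s \<otimes>\<^bsub>G\<^esub> x) <#\<^bsub>G\<^esub> N)" unfolding f_def by simp
      also have "\<dots> = F (s <#\<^bsub>G\<^esub> (x <#\<^bsub>G\<^esub> N))"
        using group.lcos_m_assoc[OF grp NC sc x(1)] by simp
      finally show "f (s <#\<^bsub>G\<^esub> v) = F (s <#\<^bsub>G\<^esub> (x <#\<^bsub>G\<^esub> N))" .
    qed
    also have "\<dots> = (\<Sum>w\<in>?V. real (schreier_adj G S (x <#\<^bsub>G\<^esub> N) w) * F w)"
      unfolding schreier_adj_def by (rule fiber_sum[OF finV finS img[OF xN], symmetric])
    finally have "(\<Sum>w\<in>?VC. real (schreier_adj G S v w) * f w) = (\<Sum>w\<in>?V. real (schreier_adj G S (x <#\<^bsub>G\<^esub> N) w) * F w)" .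
    moreover have "f v = F (x <#\<^bsub>G\<^esub> N)" unfolding f_def x(2) by simp
    ultimately show "real r * f v - (\<Sum>w\<in>?VC. real (schreier_adj G S v w) * f w) = \<mu> * f v"
      using Fe xN by simp
  qed
  ultimately show ?thesis unfolding lap_eigenvalue_def by blast
qed


lemma lap_finite:
  assumes "finite V"
  shows "finite {\<mu>. lap_eigenvalue V A r \<mu> \<and> \<mu> \<noteq> 0}"
proof (rule finite_subset[OF _ fun_eig_finite[OF assms, of "lapm A r"]])
  show "{\<mu>. lap_eigenvalue V A r \<mu> \<and> \<mu> \<noteq> 0} \<subseteq> {\<mu>. \<exists>f. (\<exists>v\<in>V. f v \<noteq> 0) \<and> (\<forall>v\<in>V. (\<Sum>w\<in>V. lapm A r v w * f w) = \<mu> * f v)}"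
  proof
    fix \<mu> assume "\<mu> \<in> {\<mu>. lap_eigenvalue V A r \<mu> \<and> \<mu> \<noteq> 0}"
    then obtain f where f0: "\<exists>v\<in>V. f v \<noteq> 0" and fe: "\<forall>v\<in>V. real r * f v - (\<Sum>w\<in>V. real (A v w) * f w) = \<mu> * f v"
      unfolding lap_eigenvalue_def by blast
    have "\<forall>v\<in>V. (\<Sum>w\<in>V. lapm A r v w * f w) = \<mu> * f v"
    proof
      fix v assume v: "v \<in> V"
      show "(\<Sum>w\<in>V. lapm A r v w * f w) = \<mu> * f v"
        using lapm_sum[OF assms v, of A r f] bspec[OF fe v] by linarith
    qed
    thus "\<mu> \<in> {\<mu>. \<exists>f. (\<exists>v\<in>V. f v \<noteq> 0) \<and> (\<forall>v\<in>V. (\<Sum>w\<in>V. lapm A r v w * f w) = \<mu> * f v)}"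
      using f0 by blast
  qed
qed

lemma card_cay:
  assumes grp: "group G"
  shows "card (cayley_vertices G) = card (carrier G)"
  unfolding cay_vert[OF grp] by (rule card_image) (auto intro: inj_onI)

lemma card_schreier_le:
  assumes fin: "finite (carrier G)"
  shows "card (schreier_vertices G N) \<le> card (carrier G)"
proof -
  have "schreier_vertices G N = (\<lambda>a. a <#\<^bsub>G\<^esub> N) ` carrier G"
    unfolding schreier_vertices_def LCOSETS_def by auto
  thus ?thesis using card_image_le[OF fin] by simp
qed

lemma card_schreier_pos:
  assumes grp: "group G" and fin: "finite (carrier G)" and sg: "symmetric_generating_set G S"
    and N: "subgroup N G" and r: "card S = r"
  shows "card (schreier_vertices G N) \<ge> 1"
  using schreier_regular[OF assms] unfolding regular_graph_def
  by (metis One_nat_def Suc_leI card_gt_0_iff)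


lemma idx_ln_bound:
  fixes k g \<delta> :: real
  assumes "\<delta> > 0" "\<delta> * ln (2 * g) \<le> ln (2 * k)"
  shows "ln (2 * g) \<le> ln (2 * k) / \<delta>"
  using assms by (simp add: pos_le_divide_eq mult.commute)

lemma final_ineq:
  fixes k g \<delta> c a :: real
  assumes d: "\<delta> > 0" and c: "c > 0" and a: "a \<ge> 0" and g2: "g \<ge> 2"
    and idx: "\<delta> * ln (2 * g) \<le> ln (2 * k)"
  shows "c / ln (2 * g) powr a \<ge> c * \<delta> powr a / ln (2 * k) powr a"
proof -
  have lg: "ln (2 * g) > 0" using g2 by simp
  have le: "ln (2 * g) \<le> ln (2 * k) / \<delta>" by (rule idx_ln_bound[OF d idx])
  have lk: "ln (2 * k) > 0" using lg le d by (smt (verit) divide_nonpos_pos)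
  have "ln (2 * g) powr a \<le> (ln (2 * k) / \<delta>) powr a"
    by (rule powr_mono2[OF a]) (use lg le in auto)
  also have "\<dots> = ln (2 * k) powr a / \<delta> powr a" using lk d by (simp add: powr_divide)
  finally have P: "ln (2 * g) powr a \<le> ln (2 * k) powr a / \<delta> powr a" .
  have "c / (ln (2 * k) powr a / \<delta> powr a) \<le> c / ln (2 * g) powr a"
    by (rule divide_left_mono[OF P]) (use c lg lk d in auto)
  thus ?thesis by simp
qed

theorem proposition3p2:
  fixes I :: "'i set"
    and G :: "'i \<Rightarrow> ('g, 'b) monoid_scheme"
    and S :: "'i \<Rightarrow> 'g set"
    and N :: "'i \<Rightarrow> 'g set"
    and r :: nat
    and \<delta> :: real
  assumes groups: "\<forall>i\<in>I. group (G i) \<and> finite (carrier (G i))"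
    and gens: "\<forall>i\<in>I. symmetric_generating_set (G i) (S i) \<and> card (S i) = r"
    and esp: "esperantist I (\<lambda>i. cayley_vertices (G i)) (\<lambda>i. schreier_adj (G i) (S i)) r"
    and subgrps: "\<forall>i\<in>I. subgroup (N i) (G i)"
    and delta_pos: "\<delta> > 0"
    and index: "\<forall>i\<in>I. ln (2 * real (card (lcosets\<^bsub>G i\<^esub> (N i))))
                        \<ge> \<delta> * ln (2 * real (card (carrier (G i))))"
  shows "esperantist I (\<lambda>i. schreier_vertices (G i) (N i)) (\<lambda>i. schreier_adj (G i) (S i)) r"
proof -
  have espC1: "\<forall>i\<in>I. regular_graph (cayley_vertices (G i)) (schreier_adj (G i) (S i)) r \<and>
      connected_graph (cayley_vertices (G i)) (schreier_adj (G i) (S i))"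
    and espC2: "\<forall>n::nat. finite {i \<in> I. card (cayley_vertices (G i)) \<le> n}"
    using esp unfolding esperantist_def by blast+
  obtain c a where c: "c > 0" and a: "a \<ge> 0"
    and bnd: "\<forall>i\<in>I. card (cayley_vertices (G i)) \<ge> 2 \<longrightarrow>
       lambda1 (cayley_vertices (G i)) (schreier_adj (G i) (S i)) r \<ge> c / (ln (2 * real (card (cayley_vertices (G i))))) powr a"
    using esp unfolding esperantist_def by blast
  have regS: "\<forall>i\<in>I. regular_graph (schreier_vertices (G i) (N i)) (schreier_adj (G i) (S i)) r \<and>
      connected_graph (schreier_vertices (G i) (N i)) (schreier_adj (G i) (S i))"
  proof
    fix i assume i: "i \<in> I"
    show "regular_graph (schreier_vertices (G i) (N i)) (schreier_adj (G i) (S i)) r \<and>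
      connected_graph (schreier_vertices (G i) (N i)) (schreier_adj (G i) (S i))"
      using schreier_regular[of "G i" "S i" "N i" r] schreier_connected[of "G i" "S i" "N i"]
        groups gens subgrps espC1 i by blast
  qed
  have idx: "\<delta> * ln (2 * real (card (cayley_vertices (G i)))) \<le> ln (2 * real (card (schreier_vertices (G i) (N i))))"
    if i: "i \<in> I" for i
    using index i card_cay[of "G i"] groups unfolding schreier_vertices_def by simp
  have fin: "finite {i \<in> I. card (schreier_vertices (G i) (N i)) \<le> n}" for n :: nat
  proof -
    define M :: nat where "M = nat \<lceil>exp (ln (2 * real n) / \<delta>)\<rceil>"
    have "{i \<in> I. card (schreier_vertices (G i) (N i)) \<le> n} \<subseteq> {i \<in> I. card (cayley_vertices (G i)) \<le> M}"
    proof
      fix i assume "i \<in> {i \<in> I. card (schreier_vertices (G i) (N i)) \<le> n}"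
      hence i: "i \<in> I" and kn: "card (schreier_vertices (G i) (N i)) \<le> n" by auto
      let ?k = "real (card (schreier_vertices (G i) (N i)))"
      let ?g = "real (card (cayley_vertices (G i)))"
      have k1: "?k \<ge> 1" using card_schreier_pos[of "G i" "S i" "N i" r] groups gens subgrps i by simp
      have gk: "?k \<le> ?g" using card_schreier_le[of "G i" "N i"] card_cay[of "G i"] groups i by simp
      have "ln (2 * ?g) \<le> ln (2 * ?k) / \<delta>" by (rule idx_ln_bound[OF delta_pos idx[OF i]])
      also have "\<dots> \<le> ln (2 * real n) / \<delta>"
        using kn k1 delta_pos by (intro divide_right_mono) auto
      finally have "exp (ln (2 * ?g)) \<le> exp (ln (2 * real n) / \<delta>)" by simp
      hence "2 * ?g \<le> exp (ln (2 * real n) / \<delta>)" using k1 gk by simp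
      hence "?g \<le> real M" unfolding M_def by linarith
      thus "i \<in> {i \<in> I. card (cayley_vertices (G i)) \<le> M}" using i by simp
    qed
    thus ?thesis using espC2 finite_subset by blast
  qed
  have bndS: "\<forall>i\<in>I. card (schreier_vertices (G i) (N i)) \<ge> 2 \<longrightarrow>
       lambda1 (schreier_vertices (G i) (N i)) (schreier_adj (G i) (S i)) r \<ge>
         (c * \<delta> powr a) / (ln (2 * real (card (schreier_vertices (G i) (N i))))) powr a"
  proof (intro ballI impI)
    fix i assume i: "i \<in> I" and k2: "card (schreier_vertices (G i) (N i)) \<ge> 2"
    let ?VS = "schreier_vertices (G i) (N i)" and ?VC = "cayley_vertices (G i)" and ?A = "schreier_adj (G i) (S i)"
    have grp: "group (G i)" and finG: "finite (carrier (G i))" using groups i by auto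
    have gk: "card ?VS \<le> card ?VC" using card_schreier_le[OF finG] card_cay[OF grp] by simp
    have g2: "card ?VC \<ge> 2" using gk k2 by simp
    let ?XS = "{\<mu>. lap_eigenvalue ?VS ?A r \<mu> \<and> \<mu> \<noteq> 0}" and ?XC = "{\<mu>. lap_eigenvalue ?VC ?A r \<mu> \<and> \<mu> \<noteq> 0}"
    have sub: "?XS \<subseteq> ?XC" using pullback[OF grp finG, of "S i" "N i" r] gens subgrps i by blast
    have ne: "?XS \<noteq> {}" using lap_nonzero_exists[of ?VS ?A r] regS i k2 by blast
    have finXC: "finite ?XC"
      by (rule lap_finite) (use espC1 i in \<open>auto simp: regular_graph_def\<close>)
    have "lambda1 ?VC ?A r \<le> lambda1 ?VS ?A r"
      unfolding lambda1_def by (rule Min_antimono[OF sub ne finXC])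
    moreover have "lambda1 ?VC ?A r \<ge> c / (ln (2 * real (card ?VC))) powr a" using bnd i g2 by blast
    moreover have "c / (ln (2 * real (card ?VC))) powr a \<ge> c * \<delta> powr a / ln (2 * real (card ?VS)) powr a"
      by (rule final_ineq[OF delta_pos c a _ idx[OF i]]) (use g2 in simp)
    ultimately show "lambda1 ?VS ?A r \<ge> (c * \<delta> powr a) / (ln (2 * real (card ?VS))) powr a" by linarith
  qed
  have "c * \<delta> powr a > 0" using c delta_pos by simp
  thus ?thesis unfolding esperantist_def using regS fin bndS a by blast
qed

end
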